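(* Let $g\in L^1([0,1])$ with $g\ge 0$, let $m\in\mathbb{N}$, $A\in D_m$, and $\lambda\in(0,1)$. Then there exists an integer $n_\lambda>m$ such that for every $n\ge n_\lambda$ there are sets $A_0,A_1\in D_n$ with $A=A_0\cup A_1$ (disjoint) satisfying: (1) $\mu(A_0)=\mu(A_1)=\tfrac12\mu(A)$; (2) $\tfrac{\lambda}{2}\int_A g\,d\mu\le\int_{A_i}g\,d\mu\le\tfrac{1}{2\lambda}\int_A g\,d\mu$ for $i=0,1$; (3) $r_n\equiv(-1)^i$ on $A_i$ for $i=0,1$.
   Context: $\mu$ is Lebesgue measure on $[0,1]$. $r_n(x)=\operatorname{sign}(\sin(2^n\pi x))$ are the Rademacher functions. For $m\in\mathbb{N}$, $D_m$ denotes the family of all sets $A\subset[0,1]$ that are finite unions of dyadic intervals $[j/2^m,(j+1)/2^m)$, $j\in\{0,\dots,2^m-1\}$. *)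

theory Defs
  imports "HOL-Analysis.Analysis"
begin

definition rademacher :: "nat \<Rightarrow> real \<Rightarrow> real" where
  "rademacher n x = sgn (sin (2 ^ n * pi * x))"

definition dyadic_interval :: "nat \<Rightarrow> nat \<Rightarrow> real set" where
  "dyadic_interval m j = {real j / 2 ^ m ..< (real j + 1) / 2 ^ m}"

definition dyadic_sets :: "nat \<Rightarrow> real set set" where
  "dyadic_sets m = {(\<Union>j\<in>J. dyadic_interval m j) | J. J \<subseteq> {..<2 ^ m}}"

end

theory Submission
  imports Defs
begin

definition lev :: "nat \<Rightarrow> real \<Rightarrow> int" where "lev k x = \<lfloor>2 ^ k * x\<rfloor>"

lemma lev_div: assumes "j \<le> k" shows "lev j x = lev k x div 2 ^ (k - j)"
proof -
  have "(2::real) ^ j * x = 2 ^ k * x / real_of_int (2 ^ (k - j))"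
  proof -
    have "(2::real) ^ k = 2 ^ j * 2 ^ (k - j)" using assms by (simp add: power_add[symmetric])
    then show ?thesis by simp
  qed
  then show ?thesis unfolding lev_def
    using floor_divide_real_eq_div[of "2 ^ (k - j)" "2 ^ k * x"] by simp
qed

lemma lev_shift: "lev k (x + 1 / 2 ^ k) = lev k x + 1"
  unfolding lev_def by (simp add: distrib_left)

lemma even_div_pow: fixes a :: int assumes "even a" "0 < d" shows "(a + 1) div 2 ^ d = a div 2 ^ d"
proof -
  obtain b where b: "a = 2 * b" using assms(1) by blast
  obtain e where e: "d = Suc e" using assms(2) gr0_implies_Suc by blast
  have "(a + 1) div 2 ^ d = (a + 1) div 2 div 2 ^ e" by (simp add: e zdiv_zmult2_eq)
  also have "\<dots> = b div 2 ^ e" using b by simp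
  also have "\<dots> = a div 2 ^ d" using b by (simp add: e zdiv_zmult2_eq)
  finally show ?thesis .
qed

lemma lev_shift_low: assumes "j < k" "even (lev k x)" shows "lev j (x + 1 / 2 ^ k) = lev j x"
  using assms by (simp add: lev_div[of j k] lev_shift even_div_pow)

lemma lev0: "lev 0 x = 0 \<longleftrightarrow> x \<in> {0..<1}"
  unfolding lev_def by (simp add: floor_eq_iff)

lemma lev_meas[measurable]: "Measurable.pred lborel (\<lambda>x. P (lev k x))"
  unfolding lev_def by measurable

lemma lev_sets: "{x. P (lev k x)} \<in> sets lborel"
  using lev_meas[of P k] by (simp add: pred_def)

lemma dyadic_mem: "x \<in> dyadic_interval k j \<longleftrightarrow> lev k x = int j"
  unfolding dyadic_interval_def lev_def by (simp add: floor_eq_iff field_simps)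

definition Sv :: "nat \<Rightarrow> real set" where "Sv k = {x. lev 0 x = 0 \<and> even (lev k x)}"
definition Tv :: "nat \<Rightarrow> real set" where "Tv k = {x. lev 0 x = 0 \<and> odd (lev k x)}"
definition wv :: "nat \<Rightarrow> real \<Rightarrow> real" where "wv k x = (if even (lev k x) then 1 else -1)"

lemma shift_mem: assumes "0 < k" shows "x + 1 / 2 ^ k \<in> Tv k \<longleftrightarrow> x \<in> Sv k"
proof
  assume "x \<in> Sv k" then show "x + 1 / 2 ^ k \<in> Tv k"
    using assms by (auto simp: Sv_def Tv_def lev_shift lev_shift_low)
next
  assume a: "x + 1 / 2 ^ k \<in> Tv k"
  then have e: "even (lev k x)" by (simp add: Tv_def lev_shift)
  then show "x \<in> Sv k" using a assms lev_shift_low[of 0 k x] by (auto simp: Sv_def Tv_def)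
qed

lemma shift_int:
  fixes F :: "real \<Rightarrow> real"
  assumes "0 < k" "\<And>x. even (lev k x) \<Longrightarrow> F (x + 1 / 2 ^ k) = F x"
  shows "(\<integral>x. indicator (Tv k) x * F x \<partial>lborel) = (\<integral>x. indicator (Sv k) x * F x \<partial>lborel)"
proof -
  have "(\<integral>x. indicator (Tv k) x * F x \<partial>lborel) = \<bar>1\<bar> *\<^sub>R (\<integral>x. indicator (Tv k) (1 / 2 ^ k + 1 * x) * F (1 / 2 ^ k + 1 * x) \<partial>lborel)"
    by (rule lborel_integral_real_affine[where c=1 and t="1 / 2 ^ k" and f="\<lambda>x. indicator (Tv k) x * F x"]) simp
  also have "\<dots> = (\<integral>x. indicator (Sv k) x * F x \<partial>lborel)"
  proof (simp, rule Bochner_Integration.integral_cong[OF refl])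
    fix x
    show "indicator (Tv k) (1 / 2 ^ k + x) * F (1 / 2 ^ k + x) = indicator (Sv k) x * F x"
      using shift_mem[OF assms(1), of x] assms(2)[of x]
      by (cases "x \<in> Sv k") (auto simp: indicator_def Sv_def add.commute)
  qed
  finally show ?thesis .
qed

lemma Sv_sets[measurable]: "Sv k \<in> sets lborel" and Tv_sets[measurable]: "Tv k \<in> sets lborel"
proof -
  have "Sv k = {x. lev 0 x = 0} \<inter> {x. even (lev k x)}" "Tv k = {x. lev 0 x = 0} \<inter> {x. odd (lev k x)}"
    by (auto simp: Sv_def Tv_def)
  then show "Sv k \<in> sets lborel" "Tv k \<in> sets lborel" by (auto intro!: sets.Int lev_sets)
qed

lemma wv_meas[measurable]: "wv k \<in> borel_measurable lborel"
  unfolding wv_def by measurable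

lemma Sv_Tv_U: "indicator (Sv k) x + indicator (Tv k) x = (indicator {0..<1} x :: real)"
  by (auto simp: indicator_def Sv_def Tv_def lev0)

lemma Sv_Tv_w: "indicator (Sv k) x - indicator (Tv k) x = (indicator {0..<1} x * wv k x :: real)"
  by (auto simp: indicator_def Sv_def Tv_def lev0 wv_def)

lemma int_bounded:
  fixes u :: "real \<Rightarrow> real"
  assumes [measurable]: "u \<in> borel_measurable lborel" and b: "\<And>x. \<bar>u x\<bar> \<le> B"
  shows "integrable lborel (\<lambda>x. indicator {0..<1} x * u x)"
proof -
  have 1: "integrable lborel (\<lambda>x. B * indicator {0..<1::real} x)"
    by (intro integrable_mult_right integrable_real_indicator) auto
  have 2: "AE x in lborel. norm (indicator {0..<1} x * u x) \<le> norm (B * indicator {0..<1::real} x)"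
    using b by (auto simp: indicator_def intro: order_trans[OF _ abs_ge_self])
  show ?thesis by (rule Bochner_Integration.integrable_bound[OF 1 _ 2]) measurable
qed

lemma int_bounded_sub:
  fixes u :: "real \<Rightarrow> real"
  assumes [measurable]: "u \<in> borel_measurable lborel" "X \<in> sets lborel" and b: "\<And>x. \<bar>u x\<bar> \<le> B"
    and X: "X \<subseteq> {0..<1}"
  shows "integrable lborel (\<lambda>x. indicator X x * u x)"
proof -
  have "integrable lborel (\<lambda>x. indicator {0..<1} x * (indicator X x * u x))"
    by (rule int_bounded[where B=B]) (use b in \<open>auto simp: indicator_def intro: order_trans[OF abs_ge_zero]\<close>)
  also have "(\<lambda>x. indicator {0..<1} x * (indicator X x * u x)) = (\<lambda>x. indicator X x * u x)"
    using X by (auto simp: indicator_def fun_eq_iff)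
  finally show ?thesis .
qed

lemma Sv_sub: "Sv k \<subseteq> {0..<1}" and Tv_sub: "Tv k \<subseteq> {0..<1}"
  by (auto simp: Sv_def Tv_def lev0)

lemma wv_bound: "\<bar>wv k x\<bar> \<le> 1"
  by (simp add: wv_def)

lemma ortho_lt:
  assumes "l < k"
  shows "(\<integral>x. indicator {0..<1} x * (wv k x * wv l x) \<partial>lborel) = 0"
proof -
  have "(\<integral>x. indicator {0..<1} x * (wv k x * wv l x) \<partial>lborel)
      = (\<integral>x. indicator (Sv k) x * wv l x - indicator (Tv k) x * wv l x \<partial>lborel)"
  proof (rule Bochner_Integration.integral_cong[OF refl])
    fix x
    show "indicator {0..<1} x * (wv k x * wv l x) = indicator (Sv k) x * wv l x - indicator (Tv k) x * wv l x"
      using Sv_Tv_w[of k x] by (metis left_diff_distrib mult.assoc)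
  qed
  also have "\<dots> = (\<integral>x. indicator (Sv k) x * wv l x \<partial>lborel) - (\<integral>x. indicator (Tv k) x * wv l x \<partial>lborel)"
    by (intro Bochner_Integration.integral_diff int_bounded_sub[where B=1] Sv_sub Tv_sub wv_bound) measurable
  also have "(\<integral>x. indicator (Tv k) x * wv l x \<partial>lborel) = (\<integral>x. indicator (Sv k) x * wv l x \<partial>lborel)"
    by (rule shift_int) (use assms in \<open>auto simp: wv_def lev_shift_low\<close>)
  finally show ?thesis by simp
qed

lemma ortho: "(\<integral>x. indicator {0..<1} x * (wv k x * wv l x) \<partial>lborel) = (if k = l then 1 else 0)"
proof (cases "k = l")
  case True
  have "(\<lambda>x. indicator {0..<1} x * (wv k x * wv l x)) = indicator {0..<1::real}"
    using True by (auto simp: wv_def)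
  then show ?thesis using True by simp
next
  case False
  then consider "l < k" | "k < l" by linarith
  then show ?thesis
  proof cases
    case 1 then show ?thesis using ortho_lt by simp
  next
    case 2 then show ?thesis using ortho_lt[of k l] by (simp add: mult.commute)
  qed
qed

lemma bessel:
  fixes h :: "real \<Rightarrow> real"
  assumes hm[measurable]: "h \<in> borel_measurable lborel" and hb: "\<And>x. \<bar>h x\<bar> \<le> B" and N: "finite N"
  defines "c \<equiv> \<lambda>n. (\<integral>x. indicator {0..<1} x * (h x * wv n x) \<partial>lborel)"
  shows "(\<Sum>n\<in>N. (c n)\<^sup>2) \<le> (\<integral>x. indicator {0..<1} x * (h x)\<^sup>2 \<partial>lborel)"
proof -
  let ?U = "indicator {0..<1::real} :: real \<Rightarrow> real"
  define \<phi> where "\<phi> x = (\<Sum>n\<in>N. c n * wv n x)" for x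
  have B0: "0 \<le> B" using hb[of 0] by linarith
  have i1: "integrable lborel (\<lambda>x. ?U x * (h x)\<^sup>2)"
    by (rule int_bounded[where B="B\<^sup>2"]) (simp_all, metis abs_ge_zero hb power2_abs power_mono)
  have i2: "integrable lborel (\<lambda>x. ?U x * (h x * wv n x))" for n
    by (rule int_bounded[where B=B]) (auto simp: abs_mult wv_def hb)
  have i3: "integrable lborel (\<lambda>x. ?U x * (wv n x * wv k x))" for n k
    by (rule int_bounded[where B=1]) (auto simp: abs_mult wv_def)
  have pt: "?U x * (h x - \<phi> x)\<^sup>2 = ?U x * (h x)\<^sup>2 - 2 * (\<Sum>n\<in>N. c n * (?U x * (h x * wv n x)))
     + (\<Sum>n\<in>N. \<Sum>k\<in>N. c n * c k * (?U x * (wv n x * wv k x)))" for x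
  proof -
    have a: "h x * \<phi> x = (\<Sum>n\<in>N. c n * (h x * wv n x))"
      unfolding \<phi>_def by (simp add: sum_distrib_left algebra_simps)
    have b: "\<phi> x * \<phi> x = (\<Sum>n\<in>N. \<Sum>k\<in>N. c n * c k * (wv n x * wv k x))"
      unfolding \<phi>_def sum_product by (simp add: algebra_simps)
    have "?U x * (h x - \<phi> x)\<^sup>2 = ?U x * (h x)\<^sup>2 - 2 * ?U x * (h x * \<phi> x) + ?U x * (\<phi> x * \<phi> x)"
      by (simp add: power2_eq_square algebra_simps)
    also have "\<dots> = ?U x * (h x)\<^sup>2 - 2 * (\<Sum>n\<in>N. c n * (?U x * (h x * wv n x)))
     + (\<Sum>n\<in>N. \<Sum>k\<in>N. c n * c k * (?U x * (wv n x * wv k x)))"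
      unfolding a b by (simp add: sum_distrib_left algebra_simps)
    finally show ?thesis .
  qed
  have "0 \<le> (\<integral>x. ?U x * (h x - \<phi> x)\<^sup>2 \<partial>lborel)"
    by (rule Bochner_Integration.integral_nonneg) simp
  also have "\<dots> = (\<integral>x. ?U x * (h x)\<^sup>2 - 2 * (\<Sum>n\<in>N. c n * (?U x * (h x * wv n x)))
     + (\<Sum>n\<in>N. \<Sum>k\<in>N. c n * c k * (?U x * (wv n x * wv k x))) \<partial>lborel)"
    by (simp only: pt)
  also have "\<dots> = (\<integral>x. ?U x * (h x)\<^sup>2 \<partial>lborel) - 2 * (\<Sum>n\<in>N. c n * c n)
     + (\<Sum>n\<in>N. \<Sum>k\<in>N. c n * c k * (if n = k then 1 else 0))"
    using i1 i2 i3 by (simp add: Bochner_Integration.integral_add Bochner_Integration.integral_diff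
        integral_sum integral_mult_right ortho c_def)
  also have "\<dots> = (\<integral>x. ?U x * (h x)\<^sup>2 \<partial>lborel) - (\<Sum>n\<in>N. (c n)\<^sup>2)"
    using N by (simp add: power2_eq_square if_distrib sum.delta cong: if_cong)
  finally show ?thesis by simp
qed

lemma coef_small:
  fixes h :: "real \<Rightarrow> real"
  assumes hm[measurable]: "h \<in> borel_measurable lborel" and hb: "\<And>x. \<bar>h x\<bar> \<le> B" and e: "0 < e"
  shows "\<exists>N. \<forall>n\<ge>N. \<bar>\<integral>x. indicator {0..<1} x * (h x * wv n x) \<partial>lborel\<bar> < e"
proof -
  define c where "c \<equiv> \<lambda>n. (\<integral>x. indicator {0..<1} x * (h x * wv n x) \<partial>lborel)"
  define C where "C = (\<integral>x. indicator {0..<1} x * (h x)\<^sup>2 \<partial>lborel)"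
  define Z where "Z = {n. e \<le> \<bar>c n\<bar>}"
  have "finite Z"
  proof (rule ccontr)
    assume "infinite Z"
    define K where "K = nat \<lceil>C / e\<^sup>2\<rceil> + 1"
    obtain F where F: "F \<subseteq> Z" "finite F" "card F = K"
      using infinite_arbitrarily_large[OF \<open>infinite Z\<close>] by blast
    have "(\<Sum>n\<in>F. e\<^sup>2) \<le> (\<Sum>n\<in>F. (c n)\<^sup>2)"
    proof (rule sum_mono)
      fix n assume "n \<in> F"
      then have "e \<le> \<bar>c n\<bar>" using F Z_def by auto
      then have "e\<^sup>2 \<le> \<bar>c n\<bar>\<^sup>2" using e by (intro power_mono) auto
      then show "e\<^sup>2 \<le> (c n)\<^sup>2" by simp
    qed
    also have "\<dots> \<le> C" unfolding C_def c_def by (rule bessel[OF hm hb F(2)])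
    finally have "real K * e\<^sup>2 \<le> C" using F by simp
    moreover have "C / e\<^sup>2 < real K" unfolding K_def by linarith
    ultimately show False using e by (simp add: field_simps)
  qed
  then obtain N where "\<forall>n\<in>Z. n < N" using finite_nat_set_iff_bounded by blast
  then have "\<forall>n\<ge>N. \<bar>c n\<bar> < e" by (auto simp: Z_def not_le[symmetric])
  then show ?thesis unfolding c_def by blast
qed

lemma core:
  fixes f :: "real \<Rightarrow> real"
  assumes fi: "integrable lborel f" and f0: "\<And>x. 0 \<le> f x"
    and fz: "\<And>x. x \<notin> {0..<1} \<Longrightarrow> f x = 0" and e: "0 < e"
  shows "\<exists>N. \<forall>n\<ge>N. \<bar>\<integral>x. f x * wv n x \<partial>lborel\<bar> < e"
proof -
  have fm[measurable]: "f \<in> borel_measurable lborel" using fi by auto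
  define s where "s M x = min (f x) (real M)" for M :: nat and x
  have sm[measurable]: "s M \<in> borel_measurable lborel" for M unfolding s_def by measurable
  have "(\<lambda>M. \<integral>x. s M x \<partial>lborel) \<longlonglongrightarrow> (\<integral>x. f x \<partial>lborel)"
  proof (rule integral_dominated_convergence[where w=f])
    show "AE x in lborel. (\<lambda>M. s M x) \<longlonglongrightarrow> f x"
    proof (rule AE_I2)
      fix x
      obtain M0 :: nat where "f x \<le> real M0" using real_arch_simple by blast
      then have "\<forall>M\<ge>M0. s M x = f x" unfolding s_def
      proof (intro allI impI)
        fix M assume "f x \<le> real M0" "M0 \<le> M"
        then have "f x \<le> real M" by (meson of_nat_le_iff order_trans)
        then show "min (f x) (real M) = f x" by simp
      qed
      then show "(\<lambda>M. s M x) \<longlonglongrightarrow> f x"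
        by (intro tendsto_eventually) (auto simp: eventually_sequentially)
    qed
    show "AE x in lborel. norm (s M x) \<le> f x" for M
      using f0 by (auto simp: s_def)
  qed (rule fm, rule sm, rule fi)
  from LIMSEQ_D[OF this, of "e/2"] e
  obtain M where M: "\<bar>(\<integral>x. s M x \<partial>lborel) - (\<integral>x. f x \<partial>lborel)\<bar> < e / 2"
    by auto
  define h where "h = s M"
  have hm[measurable]: "h \<in> borel_measurable lborel" unfolding h_def by measurable
  have h0: "0 \<le> h x" "h x \<le> f x" for x using f0 by (auto simp: h_def s_def)
  have hb: "\<bar>h x\<bar> \<le> real M" for x using f0 by (auto simp: h_def s_def)
  have hi: "integrable lborel h"
    by (rule Bochner_Integration.integrable_bound[OF fi hm]) (use h0 in \<open>auto intro!: AE_I2 order_trans[OF _ abs_ge_self]\<close>)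
  obtain N where N: "\<forall>n\<ge>N. \<bar>\<integral>x. indicator {0..<1} x * (h x * wv n x) \<partial>lborel\<bar> < e / 2"
    using coef_small[OF hm hb, of "e/2"] e by auto
  have "\<bar>\<integral>x. f x * wv n x \<partial>lborel\<bar> < e" if n: "n \<ge> N" for n
  proof -
    have eq1: "indicator {0..<1} x * (h x * wv n x) = h x * wv n x" for x
    proof (cases "x \<in> {0..<1}")
      case False
      then have "h x = 0" using fz[of x] h0[of x] by linarith
      then show ?thesis by simp
    qed simp
    have i1: "integrable lborel (\<lambda>x. h x * wv n x)"
      by (rule Bochner_Integration.integrable_bound[OF hi]) (auto simp: wv_def)
    have i2: "integrable lborel (\<lambda>x. f x * wv n x)"
      by (rule Bochner_Integration.integrable_bound[OF fi]) (auto simp: wv_def)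
    have "\<bar>(\<integral>x. f x * wv n x \<partial>lborel) - (\<integral>x. h x * wv n x \<partial>lborel)\<bar>
        = \<bar>\<integral>x. (f x - h x) * wv n x \<partial>lborel\<bar>"
      using i1 i2 by (simp add: left_diff_distrib)
    also have "\<dots> \<le> (\<integral>x. \<bar>(f x - h x) * wv n x\<bar> \<partial>lborel)"
      by (rule integral_abs_bound)
    also have "\<dots> = (\<integral>x. f x - h x \<partial>lborel)"
      using h0 by (intro Bochner_Integration.integral_cong) (auto simp: wv_def abs_mult)
    also have "\<dots> = (\<integral>x. f x \<partial>lborel) - (\<integral>x. h x \<partial>lborel)"
      using fi hi by simp
    also have "\<dots> < e / 2" using M unfolding h_def by linarith
    finally have a: "\<bar>(\<integral>x. f x * wv n x \<partial>lborel) - (\<integral>x. h x * wv n x \<partial>lborel)\<bar> < e / 2" .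
    have eqf: "(\<lambda>x. indicator {0..<1} x * (h x * wv n x)) = (\<lambda>x. h x * wv n x)"
      using eq1 by (rule ext)
    have b: "\<bar>\<integral>x. h x * wv n x \<partial>lborel\<bar> < e / 2" using N[rule_format, OF n] by (simp only: eqf)
    show ?thesis using a b by linarith
  qed
  then show ?thesis by blast
qed

lemma rad:
  assumes "x \<notin> range (\<lambda>z::int. real_of_int z / 2 ^ n)"
  shows "rademacher n x = wv n x"
proof -
  define y where "y = 2 ^ n * x"
  define k where "k = lev n x"
  have k: "k = \<lfloor>y\<rfloor>" by (simp add: k_def y_def lev_def)
  have "y \<noteq> of_int k"
  proof
    assume "y = of_int k"
    then have "x = of_int k / 2 ^ n" by (simp add: y_def field_simps)
    then show False using assms by auto
  qed
  then have t: "0 < y - k" "y - k < 1" using k by linarith+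
  have s: "0 < sin (pi * (y - k))" using t by (intro sin_gt_zero) auto
  have "sin (2 ^ n * pi * x) = sin (pi * of_int k + pi * (y - k))"
    by (simp add: y_def algebra_simps)
  also have "\<dots> = (if even k then 1 else -1) * sin (pi * (y - k))"
    by (simp add: sin_add)
  finally show ?thesis using s by (simp add: rademacher_def wv_def k_def[symmetric])
qed

lemma lev_dyadic:
  assumes "\<And>z. P z \<Longrightarrow> 0 \<le> z \<and> z < 2 ^ k"
  shows "{x. P (lev k x)} \<in> dyadic_sets k"
proof -
  define J where "J = {j. j < (2::nat) ^ k \<and> P (int j)}"
  have "{x. P (lev k x)} = (\<Union>j\<in>J. dyadic_interval k j)"
  proof (intro set_eqI iffI)
    fix x assume "x \<in> {x. P (lev k x)}"
    then have P: "P (lev k x)" by simp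
    with assms have b: "0 \<le> lev k x" "lev k x < 2 ^ k" by auto
    then have "nat (lev k x) < 2 ^ k"
      by (metis nat_less_iff of_nat_numeral of_nat_power)
    then have "nat (lev k x) \<in> J" using P b by (simp add: J_def)
    moreover have "x \<in> dyadic_interval k (nat (lev k x))" using b by (simp add: dyadic_mem)
    ultimately show "x \<in> (\<Union>j\<in>J. dyadic_interval k j)" by blast
  next
    fix x assume "x \<in> (\<Union>j\<in>J. dyadic_interval k j)"
    then show "x \<in> {x. P (lev k x)}" by (auto simp: J_def dyadic_mem)
  qed
  moreover have "J \<subseteq> {..<2 ^ k}" by (auto simp: J_def)
  ultimately show ?thesis unfolding dyadic_sets_def by blast
qed

lemma int_div_0: fixes z :: int assumes "z div 2 ^ k = 0" shows "0 \<le> z \<and> z < 2 ^ k"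
proof -
  have "z = z mod 2 ^ k" using assms div_mult_mod_eq[of z "2 ^ k"] by simp
  moreover have "0 \<le> z mod 2 ^ k" "z mod 2 ^ k < 2 ^ k" by simp_all
  ultimately show ?thesis by simp
qed

lemma mi: "measure lborel X = (\<integral>x. indicator X x \<partial>lborel)"
  by (simp add: space_borel)

theorem lemma3p1:
  fixes g :: "real \<Rightarrow> real" and m :: nat and A :: "real set" and lam :: real
  assumes "set_integrable lborel {0..1} g"
    and "\<forall>x\<in>{0..1}. g x \<ge> 0"
    and "A \<in> dyadic_sets m"
    and "0 < lam" and "lam < 1"
  shows "\<exists>n_lam::nat. n_lam > m \<and>
    (\<forall>n\<ge>n_lam. \<exists>A0 A1. A0 \<in> dyadic_sets n \<and> A1 \<in> dyadic_sets n \<and>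
        A = A0 \<union> A1 \<and> A0 \<inter> A1 = {} \<and>
        measure lborel A0 = measure lborel A / 2 \<and>
        measure lborel A1 = measure lborel A / 2 \<and>
        (\<forall>B\<in>{A0, A1}.
           lam / 2 * (\<integral>x\<in>A. g x \<partial>lborel) \<le> (\<integral>x\<in>B. g x \<partial>lborel) \<and>
           (\<integral>x\<in>B. g x \<partial>lborel) \<le> 1 / (2 * lam) * (\<integral>x\<in>A. g x \<partial>lborel)) \<and>
        (AE x in lborel. x \<in> A0 \<longrightarrow> rademacher n x = 1) \<and>
        (AE x in lborel. x \<in> A1 \<longrightarrow> rademacher n x = -1))"
proof -
  note gi = assms(1) and g0 = assms(2) and lam = assms(4,5)
  obtain Jm where Jm: "Jm \<subseteq> {..<2 ^ m}" "A = (\<Union>j\<in>Jm. dyadic_interval m j)"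
    using assms(3) unfolding dyadic_sets_def by blast
  have Achar: "A = {x. lev m x \<in> int ` Jm}"
    using Jm(2) by (auto simp: dyadic_mem)
  have AU: "A \<subseteq> {0..<1}"
  proof
    fix x assume "x \<in> A"
    then obtain j where j: "j \<in> Jm" "lev m x = int j" using Achar by auto
    have "j < 2 ^ m" using j Jm(1) by auto
    then have "int j < 2 ^ m" by (metis of_nat_less_iff of_nat_numeral of_nat_power)
    then have "lev 0 x = 0" using lev_div[of 0 m x] j by simp
    then show "x \<in> {0..<1}" by (simp add: lev0)
  qed
  have Asets[measurable]: "A \<in> sets lborel" unfolding Achar by (rule lev_sets)
  define f where "f x = indicator A x * g x" for x
  have fi: "integrable lborel f"
  proof -
    have "set_integrable lborel A g"
    proof (rule set_integrable_subset[OF gi Asets])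
      show "A \<subseteq> {0..1}" using AU by auto
    qed
    then show ?thesis unfolding set_integrable_def f_def by simp
  qed
  have f0: "0 \<le> f x" for x
    using AU g0 by (auto simp: f_def indicator_def)
  have fz: "f x = 0" if "x \<notin> {0..<1}" for x
    using AU that by (auto simp: f_def indicator_def)
  define I where "I = (\<integral>x. f x \<partial>lborel)"
  have I_eq: "(\<integral>x\<in>B. g x \<partial>lborel) = (\<integral>x. indicator B x * g x \<partial>lborel)" for B
    by (simp add: set_lebesgue_integral_def)
  have IA: "(\<integral>x\<in>A. g x \<partial>lborel) = I" unfolding I_eq I_def f_def ..
  have I0: "0 \<le> I" unfolding I_def by (rule Bochner_Integration.integral_nonneg) (simp add: f0)
  obtain N where N: "\<forall>n\<ge>N. \<bar>\<integral>x. f x * wv n x \<partial>lborel\<bar> \<le> (1 - lam) * I"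
  proof (cases "I = 0")
    case True
    show ?thesis
    proof (rule that[of 0], intro allI impI)
      fix n :: nat
      have "\<bar>\<integral>x. f x * wv n x \<partial>lborel\<bar> \<le> (\<integral>x. \<bar>f x * wv n x\<bar> \<partial>lborel)"
        by (rule integral_abs_bound)
      also have "\<dots> = I" unfolding I_def
        by (rule Bochner_Integration.integral_cong) (auto simp: wv_def f0 abs_mult)
      finally show "\<bar>\<integral>x. f x * wv n x \<partial>lborel\<bar> \<le> (1 - lam) * I" using True by simp
    qed
  next
    case False
    then have "0 < (1 - lam) * I" using I0 lam by simp
    from core[OF fi f0 fz this] show ?thesis using that by (meson less_imp_le)
  qed
  show ?thesis
  proof (intro exI[of _ "max (Suc m) N"] conjI allI impI)
    show "m < max (Suc m) N" by simp
    fix n assume n: "max (Suc m) N \<le> n"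
    then have mn: "m < n" and nN: "N \<le> n" by auto
    define A0 where "A0 = A \<inter> Sv n"
    define A1 where "A1 = A \<inter> Tv n"
    have A0c: "A0 = {x. lev n x div 2 ^ (n - m) \<in> int ` Jm \<and> lev n x div 2 ^ n = 0 \<and> even (lev n x)}"
      unfolding A0_def Achar Sv_def using lev_div[of m n] lev_div[of 0 n] mn by auto
    have A1c: "A1 = {x. lev n x div 2 ^ (n - m) \<in> int ` Jm \<and> lev n x div 2 ^ n = 0 \<and> odd (lev n x)}"
      unfolding A1_def Achar Tv_def using lev_div[of m n] lev_div[of 0 n] mn by auto
    have "A0 \<in> dyadic_sets n" unfolding A0c by (rule lev_dyadic) (use int_div_0 in blast)
    moreover have "A1 \<in> dyadic_sets n" unfolding A1c by (rule lev_dyadic) (use int_div_0 in blast)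
    moreover have AUn: "A = A0 \<union> A1" using AU by (auto simp: A0_def A1_def Sv_def Tv_def lev0)
    moreover have "A0 \<inter> A1 = {}" by (auto simp: A0_def A1_def Sv_def Tv_def)
    moreover
    have inv: "indicator A (x + 1 / 2 ^ n) = (indicator A x :: real)" if "even (lev n x)" for x
      using lev_shift_low[OF mn that] by (simp add: Achar indicator_def)
    have "measure lborel A1 = measure lborel A0"
    proof -
      have "measure lborel A1 = (\<integral>x. indicator (Tv n) x * indicator A x \<partial>lborel)"
        unfolding mi A1_def by (rule Bochner_Integration.integral_cong[OF refl]) (simp add: indicator_inter_arith mult.commute)
      also have "\<dots> = (\<integral>x. indicator (Sv n) x * indicator A x \<partial>lborel)"
        by (rule shift_int) (use mn inv in auto)
      also have "\<dots> = measure lborel A0"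
        unfolding mi A0_def by (rule Bochner_Integration.integral_cong[OF refl]) (simp add: indicator_inter_arith mult.commute)
      finally show ?thesis .
    qed
    moreover have "measure lborel A = measure lborel A0 + measure lborel A1"
    proof -
      have "measure lborel A = (\<integral>x. indicator (Sv n) x * indicator A x + indicator (Tv n) x * indicator A x \<partial>lborel)"
      proof -
        have "(\<lambda>x. indicator (Sv n) x * indicator A x + indicator (Tv n) x * indicator A x) = (indicator A :: real \<Rightarrow> real)"
        proof
          fix x show "indicator (Sv n) x * indicator A x + indicator (Tv n) x * indicator A x = (indicator A x :: real)"
            using Sv_Tv_U[of n x] AU by (auto simp: indicator_def distrib_right[symmetric])
        qed
        then show ?thesis by (simp only: mi)
      qed
      also have "\<dots> = (\<integral>x. indicator (Sv n) x * indicator A x \<partial>lborel) + (\<integral>x. indicator (Tv n) x * indicator A x \<partial>lborel)"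
        by (intro Bochner_Integration.integral_add int_bounded_sub[where B=1] Sv_sub Tv_sub Sv_sets Tv_sets) auto
      also have "\<dots> = measure lborel A0 + measure lborel A1"
        unfolding mi A0_def A1_def indicator_inter_arith by (simp only: mult.commute)
      finally show ?thesis .
    qed
    ultimately have meas: "measure lborel A0 = measure lborel A / 2" "measure lborel A1 = measure lborel A / 2"
      by auto
    have iS: "integrable lborel (\<lambda>x. indicator (Sv n) x * f x)"
      using integrable_mult_indicator[OF Sv_sets fi] by simp
    have iT: "integrable lborel (\<lambda>x. indicator (Tv n) x * f x)"
      using integrable_mult_indicator[OF Tv_sets fi] by simp
    define I0 where "I0 = (\<integral>x. indicator (Sv n) x * f x \<partial>lborel)"
    define I1 where "I1 = (\<integral>x. indicator (Tv n) x * f x \<partial>lborel)"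
    have eI0: "(\<integral>x\<in>A0. g x \<partial>lborel) = I0"
      unfolding I_eq I0_def f_def A0_def by (simp add: indicator_inter_arith mult.assoc mult.left_commute)
    have eI1: "(\<integral>x\<in>A1. g x \<partial>lborel) = I1"
      unfolding I_eq I1_def f_def A1_def by (simp add: indicator_inter_arith mult.assoc mult.left_commute)
    have fU: "indicator {0..<1} x * f x = f x" for x
      using fz[of x] by (auto simp: indicator_def)
    have sum: "I0 + I1 = I"
    proof -
      have "I0 + I1 = (\<integral>x. indicator (Sv n) x * f x + indicator (Tv n) x * f x \<partial>lborel)"
        unfolding I0_def I1_def using iS iT by simp
      also have "\<dots> = I" unfolding I_def
        by (rule Bochner_Integration.integral_cong[OF refl])
          (metis Sv_Tv_U distrib_right fU)
      finally show ?thesis .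
    qed
    have diff: "I0 - I1 = (\<integral>x. f x * wv n x \<partial>lborel)"
    proof -
      have "I0 - I1 = (\<integral>x. indicator (Sv n) x * f x - indicator (Tv n) x * f x \<partial>lborel)"
        unfolding I0_def I1_def using iS iT by simp
      also have "\<dots> = (\<integral>x. f x * wv n x \<partial>lborel)"
        by (rule Bochner_Integration.integral_cong[OF refl])
          (metis Sv_Tv_w left_diff_distrib fU mult.commute mult.left_commute)
      finally show ?thesis .
    qed
    have nn: "0 \<le> I0" "0 \<le> I1" unfolding I0_def I1_def
      by (auto intro!: Bochner_Integration.integral_nonneg simp: f0)
    have D: "\<bar>I0 - I1\<bar> \<le> (1 - lam) * I" using N nN diff by simp
    have key: "lam / 2 * I \<le> J \<and> J \<le> 1 / (2 * lam) * I" if "J = I0 \<or> J = I1" for J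
    proof -
      have lo: "lam / 2 * I \<le> J" using that D sum by (auto simp: algebra_simps)
      have "J \<le> (2 - lam) / 2 * I" using that D sum by (auto simp: algebra_simps)
      also have "\<dots> \<le> 1 / (2 * lam) * I"
      proof (rule mult_right_mono[OF _ I0])
        have "lam * (2 - lam) \<le> 1" using sum_squares_ge_zero[of "1 - lam" 0]
          by (simp add: algebra_simps power2_eq_square)
        then show "(2 - lam) / 2 \<le> 1 / (2 * lam)" using lam by (simp add: field_simps)
      qed
      finally show ?thesis using lo by simp
    qed
    have "\<forall>B\<in>{A0, A1}. lam / 2 * (\<integral>x\<in>A. g x \<partial>lborel) \<le> (\<integral>x\<in>B. g x \<partial>lborel) \<and>
           (\<integral>x\<in>B. g x \<partial>lborel) \<le> 1 / (2 * lam) * (\<integral>x\<in>A. g x \<partial>lborel)"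
      using key eI0 eI1 IA by auto
    moreover
    have AEd: "AE x in lborel. x \<notin> range (\<lambda>z::int. real_of_int z / 2 ^ n)"
      by (intro AE_not_in countable_imp_null_set_lborel) auto
    have "AE x in lborel. x \<in> A0 \<longrightarrow> rademacher n x = 1"
      using AEd by eventually_elim (auto simp: rad A0_def Sv_def wv_def)
    moreover have "AE x in lborel. x \<in> A1 \<longrightarrow> rademacher n x = -1"
      using AEd by eventually_elim (auto simp: rad A1_def Tv_def wv_def)
    ultimately show "\<exists>A0 A1. A0 \<in> dyadic_sets n \<and> A1 \<in> dyadic_sets n \<and>
        A = A0 \<union> A1 \<and> A0 \<inter> A1 = {} \<and>
        measure lborel A0 = measure lborel A / 2 \<and>
        measure lborel A1 = measure lborel A / 2 \<and>
        (\<forall>B\<in>{A0, A1}.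
           lam / 2 * (\<integral>x\<in>A. g x \<partial>lborel) \<le> (\<integral>x\<in>B. g x \<partial>lborel) \<and>
           (\<integral>x\<in>B. g x \<partial>lborel) \<le> 1 / (2 * lam) * (\<integral>x\<in>A. g x \<partial>lborel)) \<and>
        (AE x in lborel. x \<in> A0 \<longrightarrow> rademacher n x = 1) \<and>
        (AE x in lborel. x \<in> A1 \<longrightarrow> rademacher n x = -1)"
      using meas \<open>A0 \<in> dyadic_sets n\<close> \<open>A1 \<in> dyadic_sets n\<close> AUn \<open>A0 \<inter> A1 = {}\<close> by blast
  qed
qed

end
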